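(* Let $a_0,a_1,a_2\in\mathbb{C}$ with $a_2\neq0$ such that the polynomial $f(x)=a_0+a_1x+a_2x^2$ has no positive integer root, and let $\Lambda=a_0D+a_1DxD+a_2(Dx)^2D$. Then there is no monic polynomial sequence $\{B_n\}_{n\ge0}$ which is both $\Lambda$-Appell and orthogonal.
   Context: $\mathcal{P}$ is the space of complex polynomials, $D$ the derivative, $x$ multiplication by $x$, products are compositions. A monic polynomial sequence (MPS) is $\{B_n\}_{n\ge0}$ with $B_n$ monic of degree $n$. Under the hypotheses, $\Lambda$ is a lowering operator with $\Lambda(x^n)=nf(n)x^{n-1}$; an MPS is $\Lambda$-Appell if $\Lambda B_{n+1}=\rho_nB_n$ for all $n\ge0$ with $\rho_n=(n+1)f(n+1)$. An MPS is orthogonal if there is a linear functional $u$ on $\mathcal{P}$ with $\langle u,B_nB_m\rangle=0$ for $n\neq m$ and $\langle u,B_n^2\rangle\neq0$ for all $n\ge0$. *)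

theory Defs
  imports "HOL-Computational_Algebra.Polynomial"
begin

definition mulx :: "complex poly \<Rightarrow> complex poly" where
  "mulx p = [:0, 1:] * p"

definition Lam :: "complex \<Rightarrow> complex \<Rightarrow> complex \<Rightarrow> complex poly \<Rightarrow> complex poly" where
  "Lam a0 a1 a2 p =
     smult a0 (pderiv p)
   + smult a1 (pderiv (mulx (pderiv p)))
   + smult a2 (pderiv (mulx (pderiv (mulx (pderiv p)))))"

definition MPS :: "(nat \<Rightarrow> complex poly) \<Rightarrow> bool" where
  "MPS B \<longleftrightarrow> (\<forall>n. degree (B n) = n \<and> lead_coeff (B n) = 1)"

definition Lam_Appell :: "complex \<Rightarrow> complex \<Rightarrow> complex \<Rightarrow> (nat \<Rightarrow> complex poly) \<Rightarrow> bool" where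
  "Lam_Appell a0 a1 a2 B \<longleftrightarrow> MPS B \<and>
     (\<forall>n. Lam a0 a1 a2 (B (Suc n)) =
           smult (of_nat (Suc n) * poly [:a0, a1, a2:] (of_nat (Suc n))) (B n))"

definition lin_functional :: "(complex poly \<Rightarrow> complex) \<Rightarrow> bool" where
  "lin_functional u \<longleftrightarrow> (\<forall>p q. u (p + q) = u p + u q) \<and> (\<forall>c p. u (smult c p) = c * u p)"

definition orthogonal_MPS :: "(nat \<Rightarrow> complex poly) \<Rightarrow> bool" where
  "orthogonal_MPS B \<longleftrightarrow> MPS B \<and> (\<exists>u. lin_functional u \<and>
     (\<forall>n m. n \<noteq> m \<longrightarrow> u (B n * B m) = 0) \<and> (\<forall>n. u (B n * B n) \<noteq> 0))"

end

theory Submission imports Defs begin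

lemma mulx_pCons: "mulx p = pCons 0 p"
  by (simp add: mulx_def)

lemma coeff_Lam:
  "coeff (Lam a0 a1 a2 p) k = of_nat (Suc k) * poly [:a0,a1,a2:] (of_nat (Suc k)) * coeff p (Suc k)"
  by (simp add: Lam_def mulx_pCons coeff_pderiv algebra_simps power2_eq_square)

locale orth =
  fixes B :: "nat \<Rightarrow> complex poly" and u :: "complex poly \<Rightarrow> complex"
  assumes mps: "MPS B" and lin: "lin_functional u"
    and orth0: "\<And>n m. n \<noteq> m \<Longrightarrow> u (B n * B m) = 0"
    and nz: "\<And>n. u (B n * B n) \<noteq> 0"
begin

lemma u_add: "u (p + q) = u p + u q" using lin by (simp add: lin_functional_def)
lemma u_smult: "u (smult c p) = c * u p" using lin by (simp add: lin_functional_def)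
lemma u_zero: "u 0 = 0" using u_smult[of 0 0] by simp
lemma u_diff: "u (p - q) = u p - u q"
  using u_add[of "p - q" q] by simp

lemma degB: "degree (B n) = n" using mps by (simp add: MPS_def)
lemma lcB: "coeff (B n) n = 1"
proof -
  have d: "degree (B n) = n" and c: "lead_coeff (B n) = 1" using mps unfolding MPS_def by blast+
  show ?thesis using c unfolding d .
qed
lemma B_nz: "B n \<noteq> 0" using lcB[of n] by auto
lemma coeffB_hi: "n < i \<Longrightarrow> coeff (B n) i = 0" using degB[of n] by (simp add: coeff_eq_0)

lemma decomp:
  assumes "p \<noteq> 0"
  shows "\<exists>q. p = smult (lead_coeff p) (B (degree p)) + q \<and> (\<forall>i\<ge>degree p. coeff q i = 0)"
proof -
  define q where "q = p - smult (lead_coeff p) (B (degree p))"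
  have "\<forall>i\<ge>degree p. coeff q i = 0"
  proof (intro allI impI)
    fix i assume i: "degree p \<le> i"
    show "coeff q i = 0"
    proof (cases "i = degree p")
      case True then show ?thesis by (simp add: q_def lcB)
    next
      case False then have "degree p < i" using i by simp
      then show ?thesis by (simp add: q_def coeff_eq_0 coeffB_hi degB)
    qed
  qed
  moreover have "p = smult (lead_coeff p) (B (degree p)) + q" by (simp add: q_def)
  ultimately show ?thesis by blast
qed

lemma low_zero:
  "(\<forall>i\<ge>n. coeff p i = 0) \<Longrightarrow> u (B n * p) = 0"
proof (induction "degree p" arbitrary: p rule: less_induct)
  case less
  show ?case
  proof (cases "p = 0")
    case True then show ?thesis by (simp add: u_zero)
  next
    case False
    define d where "d = degree p"
    have dn: "d < n"
    proof (rule ccontr)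
      assume "\<not> d < n" then have "coeff p d = 0" using less.prems by simp
      with False show False by (simp add: d_def)
    qed
    obtain q where q: "p = smult (lead_coeff p) (B d) + q" and qc: "\<forall>i\<ge>d. coeff q i = 0"
      using decomp[OF False] unfolding d_def by blast
    have "u (B n * q) = 0"
    proof (cases "q = 0")
      case True then show ?thesis by (simp add: u_zero)
    next
      case False
      have "degree q < d"
      proof (rule ccontr)
        assume "\<not> degree q < d" then have "coeff q (degree q) = 0" using qc by simp
        with False show False by simp
      qed
      moreover have "\<forall>i\<ge>n. coeff q i = 0" using qc dn by simp
      ultimately show ?thesis using less.hyps d_def by blast
    qed
    moreover have "B n * p = smult (lead_coeff p) (B n * B d) + B n * q"
      by (subst q) (simp add: algebra_simps)
    ultimately show ?thesis using orth0[of n d] dn by (simp add: u_add u_smult)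
  qed
qed

lemma zero_low:
  assumes c: "\<forall>i\<ge>m. coeff R i = 0" and o: "\<forall>j<m. u (B j * R) = 0"
  shows "R = 0"
proof (rule ccontr)
  assume R: "R \<noteq> 0"
  define d where "d = degree R"
  have dm: "d < m"
  proof (rule ccontr)
    assume "\<not> d < m" then have "coeff R d = 0" using c by simp
    with R show False by (simp add: d_def)
  qed
  obtain q where q: "R = smult (lead_coeff R) (B d) + q" and qc: "\<forall>i\<ge>d. coeff q i = 0"
    using decomp[OF R] unfolding d_def by blast
  have "B d * R = smult (lead_coeff R) (B d * B d) + B d * q"
    by (subst q) (simp add: algebra_simps)
  then have "u (B d * R) = lead_coeff R * u (B d * B d)"
    using low_zero[OF qc] by (simp add: u_add u_smult)
  moreover have "u (B d * R) = 0" using o dm by simp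
  ultimately show False using R nz[of d] by simp
qed

lemma coeff_mulx: "coeff (mulx p) (Suc i) = coeff p i" "coeff (mulx p) 0 = 0"
  by (simp_all add: mulx_pCons)

lemma three_term:
  assumes "n = Suc k"
  shows "\<exists>\<beta> \<gamma>. \<gamma> \<noteq> 0 \<and> mulx (B n) = B (Suc n) + smult \<beta> (B n) + smult \<gamma> (B k)"
proof -
  define \<beta> where "\<beta> = coeff (mulx (B n) - B (Suc n)) n"
  define \<gamma> where "\<gamma> = coeff (mulx (B n) - B (Suc n) - smult \<beta> (B n)) k"
  define R where "R = mulx (B n) - B (Suc n) - smult \<beta> (B n) - smult \<gamma> (B k)"
  have c: "\<forall>i\<ge>k. coeff R i = 0"
  proof (intro allI impI)
    fix i assume i: "k \<le> i"
    consider "i = k" | "i = n" | "i = Suc n" | "Suc n < i" using i assms by linarith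
    then show "coeff R i = 0"
    proof cases
      case 1 then show ?thesis by (simp add: R_def \<gamma>_def lcB)
    next
      case 2 then show ?thesis using assms by (simp add: R_def \<beta>_def lcB coeffB_hi)
    next
      case 3 then show ?thesis using assms
        by (simp add: R_def lcB coeffB_hi coeff_mulx)
    next
      case 4 then obtain i' where i': "i = Suc i'" "n < i'" by (cases i) auto
      then show ?thesis using assms
        by (simp add: R_def lcB coeffB_hi coeff_mulx)
    qed
  qed
  have o: "\<forall>j<k. u (B j * R) = 0"
  proof (intro allI impI)
    fix j assume j: "j < k"
    have e: "B j * R = B n * mulx (B j) - B j * B (Suc n) - smult \<beta> (B j * B n) - smult \<gamma> (B j * B k)"
      by (simp add: R_def mulx_def algebra_simps)
    have "\<forall>i\<ge>n. coeff (mulx (B j)) i = 0"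
    proof (intro allI impI)
      fix i assume "n \<le> i"
      then obtain i' where "i = Suc i'" "j < i'" using j assms by (cases i) auto
      then show "coeff (mulx (B j)) i = 0" by (simp add: coeff_mulx coeffB_hi)
    qed
    then have "u (B n * mulx (B j)) = 0" by (rule low_zero)
    then show "u (B j * R) = 0" unfolding e using j assms
      by (simp add: u_diff u_smult orth0)
  qed
  have R0: "R = 0" by (rule zero_low[OF c o])
  then have rec: "mulx (B n) = B (Suc n) + smult \<beta> (B n) + smult \<gamma> (B k)"
    by (simp add: R_def algebra_simps)
  have "B k * mulx (B n) = B k * B (Suc n) + smult \<beta> (B k * B n) + smult \<gamma> (B k * B k)"
    by (subst rec) (simp add: algebra_simps)
  then have A: "u (B k * mulx (B n)) = \<gamma> * u (B k * B k)"
    using assms by (simp add: u_add u_smult orth0)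
  define s where "s = mulx (B k) - B n"
  have sc: "\<forall>i\<ge>n. coeff s i = 0"
  proof (intro allI impI)
    fix i assume "n \<le> i"
    then obtain i' where "i = Suc i'" "k \<le> i'" using assms by (cases i) auto
    then show "coeff s i = 0" using assms
      by (cases "i' = k") (simp_all add: s_def coeff_mulx coeffB_hi lcB)
  qed
  have "B k * mulx (B n) = B n * B n + B n * s"
    by (simp add: s_def mulx_def algebra_simps)
  then have "u (B k * mulx (B n)) = u (B n * B n)"
    using low_zero[OF sc] by (simp add: u_add)
  with A nz[of n] have "\<gamma> \<noteq> 0" by auto
  with rec show ?thesis by blast
qed

end

lemma elim3:
  fixes a0 a1 a2 e C D :: complex and r :: "nat \<Rightarrow> complex"
  assumes a2: "a2 \<noteq> 0"
  and H: "\<And>n::nat. n \<in> {1,2,3} \<Longrightarrow> D*(r(n+1) - r(n+4)) = e*C*(r(n+3) - r(n+4)) + e*C*(r(n+2) - r(n+4)) - e^3*(r(n+3) - r(n+4))"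
  and rd: "\<And>k. r k = rr (of_nat k)"
  and rr: "\<And>x. rr x = x*(a0 + a1*x + a2*x^2)"
  shows "D = 0 \<and> e = 0"
proof -
  have ee: "D*(rr 2 - rr 5) = e*C*(rr 4 - rr 5) + e*C*(rr 3 - rr 5) - e^3*(rr 4 - rr 5)"
           "D*(rr 3 - rr 6) = e*C*(rr 5 - rr 6) + e*C*(rr 4 - rr 6) - e^3*(rr 5 - rr 6)"
           "D*(rr 4 - rr 7) = e*C*(rr 6 - rr 7) + e*C*(rr 5 - rr 7) - e^3*(rr 6 - rr 7)"
    using H[of 1] H[of 2] H[of 3] by (simp_all add: rd)
  have w: "a2*(3*D + e^3 - 3*e*C) = 0" using ee unfolding rr by algebra
  then have W: "3*D + e^3 - 3*e*C = 0" using a2 by simp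
  have x: "a2*(3*D - e*C) = 0" using ee W unfolding rr by algebra
  then have X: "3*D - e*C = 0" using a2 by simp
  have "a2*D = 0" using ee W X unfolding rr by algebra
  then have D: "D = 0" using a2 by simp
  with X W have "e^3 = 0" by auto
  with D show ?thesis by simp
qed

lemma elim4:
  fixes a0 a1 a2 E C :: complex and r :: "nat \<Rightarrow> complex"
  assumes a2: "a2 \<noteq> 0"
  and H: "\<And>n::nat. n \<in> {1,2,3} \<Longrightarrow> E*(r(n+1) - r(n+5)) = C^2*(r(n+3) - r(n+5))"
  and rd: "\<And>k. r k = rr (of_nat k)"
  and rr: "\<And>x. rr x = x*(a0 + a1*x + a2*x^2)"
  shows "C = 0"
proof -
  have ee: "E*(rr 2 - rr 6) = C^2*(rr 4 - rr 6)"
           "E*(rr 3 - rr 7) = C^2*(rr 5 - rr 7)"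
           "E*(rr 4 - rr 8) = C^2*(rr 6 - rr 8)"
    using H[of 1] H[of 2] H[of 3] by (simp_all add: rd)
  have w: "a2*(2*E - C^2) = 0" using ee unfolding rr by algebra
  then have W: "2*E - C^2 = 0" using a2 by simp
  have "a2*C^2 = 0" using ee W unfolding rr by algebra
  then show "C = 0" using a2 by simp
qed

theorem theorem3:
  fixes a0 a1 a2 :: complex
  assumes "a2 \<noteq> 0"
    and "\<forall>n::nat. n \<ge> 1 \<longrightarrow> poly [:a0, a1, a2:] (of_nat n) \<noteq> 0"
  shows "\<not> (\<exists>B. Lam_Appell a0 a1 a2 B \<and> orthogonal_MPS B)"
proof
  assume "\<exists>B. Lam_Appell a0 a1 a2 B \<and> orthogonal_MPS B"
  then obtain B where App: "Lam_Appell a0 a1 a2 B" and Or: "orthogonal_MPS B" by blast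
  from Or obtain u where lin: "lin_functional u"
    and o1: "\<forall>n m. n \<noteq> m \<longrightarrow> u (B n * B m) = 0" and o2: "\<forall>n. u (B n * B n) \<noteq> 0"
    and mps: "MPS B"
    unfolding orthogonal_MPS_def by blast
  interpret orth B u using mps lin o1 o2 by unfold_locales auto
  define rr where "rr = (\<lambda>x::complex. x*(a0 + a1*x + a2*x^2))"
  define r where "r = (\<lambda>k::nat. rr (of_nat k))"
  have rr_eq: "\<And>x. rr x = x*(a0 + a1*x + a2*x^2)" by (simp add: rr_def)
  have rd: "\<And>k. r k = rr (of_nat k)" by (simp add: r_def)
  note sucs[simp] = numeral_eq_Suc add_Suc_right
  have r_poly: "\<And>k. r k = of_nat k * poly [:a0,a1,a2:] (of_nat k)"
    by (simp add: r_def rr_def algebra_simps power2_eq_square)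
  have rnz: "\<And>k. k \<ge> 1 \<Longrightarrow> r k \<noteq> 0"
  proof -
    fix k :: nat assume k: "k \<ge> 1"
    have "poly [:a0,a1,a2:] (of_nat k) \<noteq> 0" using assms(2) k by blast
    then show "r k \<noteq> 0" using k by (simp add: r_poly)
  qed
  have AppC: "\<And>n k. r (k+1) * coeff (B (n+1)) (k+1) = r (n+1) * coeff (B n) k"
  proof -
    fix n k
    have "Lam a0 a1 a2 (B (Suc n)) = smult (of_nat (Suc n) * poly [:a0, a1, a2:] (of_nat (Suc n))) (B n)"
      using App by (simp add: Lam_Appell_def)
    then have "coeff (Lam a0 a1 a2 (B (Suc n))) k = coeff (smult (of_nat (Suc n) * poly [:a0, a1, a2:] (of_nat (Suc n))) (B n)) k"
      by simp
    then show "r (k+1) * coeff (B (n+1)) (k+1) = r (n+1) * coeff (B n) k"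
      by (simp add: coeff_Lam r_poly del: of_nat_Suc)
  qed
  have rec: "\<And>m. \<exists>\<beta> \<gamma>. \<gamma> \<noteq> 0 \<and> (\<forall>k. coeff (B (Suc m)) k = coeff (B (Suc (Suc m))) (Suc k) + \<beta> * coeff (B (Suc m)) (Suc k) + \<gamma> * coeff (B m) (Suc k))"
  proof -
    fix m
    obtain \<beta> \<gamma> where g: "\<gamma> \<noteq> 0" and eq: "mulx (B (Suc m)) = B (Suc (Suc m)) + smult \<beta> (B (Suc m)) + smult \<gamma> (B m)"
      using three_term[of "Suc m" m] by blast
    have "\<forall>k. coeff (B (Suc m)) k = coeff (B (Suc (Suc m))) (Suc k) + \<beta> * coeff (B (Suc m)) (Suc k) + \<gamma> * coeff (B m) (Suc k)"
    proof
      fix k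
      have "coeff (mulx (B (Suc m))) (Suc k) = coeff (B (Suc (Suc m)) + smult \<beta> (B (Suc m)) + smult \<gamma> (B m)) (Suc k)"
        by (subst eq) simp
      then show "coeff (B (Suc m)) k = coeff (B (Suc (Suc m))) (Suc k) + \<beta> * coeff (B (Suc m)) (Suc k) + \<gamma> * coeff (B m) (Suc k)"
        by (simp add: coeff_mulx)
    qed
    with g show "?thesis m" by blast
  qed
  define e where "e = coeff (B 1) 0 / r 1"
  define C where "C = coeff (B 2) 0 / (r 1 * r 2)"
  define D where "D = coeff (B 3) 0 / (r 1 * r 2 * r 3)"
  define E where "E = coeff (B 4) 0 / (r 1 * r 2 * r 3 * r 4)"
  have r1: "r 1 \<noteq> 0" and r2: "r 2 \<noteq> 0" and r3: "r 3 \<noteq> 0" and r4: "r 4 \<noteq> 0" using rnz by auto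
  have cf1: "\<And>m. coeff (B (m+1)) m = e * r (m+1)"
  proof -
    fix m show "coeff (B (m+1)) m = e * r (m+1)"
    proof (induction m)
      case 0 then show ?case using r1 by (simp add: e_def)
    next
      case (Suc m)
      have "r (m+1) * coeff (B (m+2)) (m+1) = r (m+1) * (e * r (m+2))"
        using AppC[of m "m+1"] Suc.IH by (simp add: mult_ac)
      then show ?case using rnz[of "m+1"] by simp
    qed
  qed
  have cf2: "\<And>m. coeff (B (m+2)) m = C * r (m+1) * r (m+2)"
  proof -
    fix m show "coeff (B (m+2)) m = C * r (m+1) * r (m+2)"
    proof (induction m)
      case 0 then show ?case using r1 r2 by (simp add: C_def numeral_eq_Suc)
    next
      case (Suc m)
      have "r (m+1) * coeff (B (m+3)) (m+1) = r (m+1) * (C * r (m+2) * r (m+3))"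
        using AppC[of m "m+2"] Suc.IH by (simp add: mult_ac)
      then show ?case using rnz[of "m+1"] by simp
    qed
  qed
  have cf3: "\<And>m. coeff (B (m+3)) m = D * r (m+1) * r (m+2) * r (m+3)"
  proof -
    fix m show "coeff (B (m+3)) m = D * r (m+1) * r (m+2) * r (m+3)"
    proof (induction m)
      case 0 then show ?case using r1 r2 r3 by (simp add: D_def numeral_eq_Suc)
    next
      case (Suc m)
      have "r (m+1) * coeff (B (m+4)) (m+1) = r (m+1) * (D * r (m+2) * r (m+3) * r (m+4))"
        using AppC[of m "m+3"] Suc.IH by (simp add: mult_ac)
      then show ?case using rnz[of "m+1"] by simp
    qed
  qed
  have cf4: "\<And>m. coeff (B (m+4)) m = E * r (m+1) * r (m+2) * r (m+3) * r (m+4)"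
  proof -
    fix m show "coeff (B (m+4)) m = E * r (m+1) * r (m+2) * r (m+3) * r (m+4)"
    proof (induction m)
      case 0 then show ?case using r1 r2 r3 r4 by (simp add: E_def numeral_eq_Suc)
    next
      case (Suc m)
      have "r (m+1) * coeff (B (m+5)) (m+1) = r (m+1) * (E * r (m+2) * r (m+3) * r (m+4) * r (m+5))"
        using AppC[of m "m+4"] Suc.IH by (simp add: mult_ac)
      then show ?case using rnz[of "m+1"] by simp
    qed
  qed
  have Eq3: "\<And>m. D*(r(m+1) - r(m+4)) = e*C*(r(m+3) - r(m+4)) + e*C*(r(m+2) - r(m+4)) - e^3*(r(m+3) - r(m+4))"
  proof -
    fix m
    obtain \<beta> \<gamma> where hk: "\<forall>k. coeff (B (Suc (m+2))) k = coeff (B (Suc (Suc (m+2)))) (Suc k) + \<beta> * coeff (B (Suc (m+2))) (Suc k) + \<gamma> * coeff (B (m+2)) (Suc k)"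
      using rec[of "m+2"] by blast
    have E1: "e*r(m+3) = e*r(m+4) + \<beta>"
      using hk[rule_format, of "m+2"] cf1[of "m+2"] cf1[of "m+3"] lcB[of "m+3"] coeffB_hi[of "m+2" "m+3"] by simp
    have E2: "C*r(m+2)*r(m+3) = C*r(m+3)*r(m+4) + \<beta>*(e*r(m+3)) + \<gamma>"
      using hk[rule_format, of "m+1"] cf2[of "m+1"] cf2[of "m+2"] cf1[of "m+2"] lcB[of "m+2"] by simp
    have E3: "D*r(m+1)*r(m+2)*r(m+3) = D*r(m+2)*r(m+3)*r(m+4) + \<beta>*(C*r(m+2)*r(m+3)) + \<gamma>*(e*r(m+2))"
      using hk[rule_format, of m] cf3[of m] cf3[of "m+1"] cf2[of "m+1"] cf1[of "m+1"] by simp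
    have "r(m+2)*r(m+3)*((D*(r(m+1) - r(m+4))) - (e*C*(r(m+3) - r(m+4)) + e*C*(r(m+2) - r(m+4)) - e^3*(r(m+3) - r(m+4)))) = 0"
      using E1 E2 E3 by algebra
    then show "D*(r(m+1) - r(m+4)) = e*C*(r(m+3) - r(m+4)) + e*C*(r(m+2) - r(m+4)) - e^3*(r(m+3) - r(m+4))"
      using rnz[of "m+2"] rnz[of "m+3"] by simp
  qed
  have De: "D = 0 \<and> e = 0"
    by (rule elim3[OF assms(1) Eq3 rd rr_eq])
  have Eq4: "\<And>m. E*(r(m+1) - r(m+5)) = C^2*(r(m+3) - r(m+5))"
  proof -
    fix m
    obtain \<beta> \<gamma> where hk: "\<forall>k. coeff (B (Suc (m+3))) k = coeff (B (Suc (Suc (m+3)))) (Suc k) + \<beta> * coeff (B (Suc (m+3))) (Suc k) + \<gamma> * coeff (B (m+3)) (Suc k)"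
      using rec[of "m+3"] by blast
    have E1: "e*r(m+4) = e*r(m+5) + \<beta>"
      using hk[rule_format, of "m+3"] cf1[of "m+3"] cf1[of "m+4"] lcB[of "m+4"] coeffB_hi[of "m+3" "m+4"] by simp
    have E2: "C*r(m+3)*r(m+4) = C*r(m+4)*r(m+5) + \<beta>*(e*r(m+4)) + \<gamma>"
      using hk[rule_format, of "m+2"] cf2[of "m+2"] cf2[of "m+3"] cf1[of "m+3"] lcB[of "m+3"] by simp
    have E4: "E*r(m+1)*r(m+2)*r(m+3)*r(m+4) = E*r(m+2)*r(m+3)*r(m+4)*r(m+5) + \<beta>*(D*r(m+2)*r(m+3)*r(m+4)) + \<gamma>*(C*r(m+2)*r(m+3))"
      using hk[rule_format, of m] cf4[of m] cf4[of "m+1"] cf3[of "m+1"] cf2[of "m+1"] by simp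
    have "r(m+2)*r(m+3)*r(m+4)*(E*(r(m+1) - r(m+5)) - C^2*(r(m+3) - r(m+5))) = 0"
      using E1 E2 E4 De by algebra
    then show "E*(r(m+1) - r(m+5)) = C^2*(r(m+3) - r(m+5))"
      using rnz[of "m+2"] rnz[of "m+3"] rnz[of "m+4"] by simp
  qed
  have C0: "C = 0" by (rule elim4[OF assms(1) Eq4 rd rr_eq])
  obtain \<beta> \<gamma> where g: "\<gamma> \<noteq> 0" and hk: "\<forall>k. coeff (B (Suc 3)) k = coeff (B (Suc (Suc 3))) (Suc k) + \<beta> * coeff (B (Suc 3)) (Suc k) + \<gamma> * coeff (B 3) (Suc k)"
    using rec[of 3] by blast
  have "C*r 3*r 4 = C*r 4*r 5 + \<beta>*(e*r 4) + \<gamma>"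
    using hk[rule_format, of 2] cf2[of 2] cf2[of 3] cf1[of 3] lcB[of 3] by (simp add: numeral_eq_Suc)
  with C0 De g show False by simp
qed

end
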